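(* Let $G$ be a connected graph and $r\in\mathbb{N}$. Then the $r$-local covering $p_r:G_r\to G$ preserves $(r/2)$-balls.
   Context: Graphs may have loops and parallel edges and are viewed as 1-complexes; a cycle may be a loop or a pair of parallel edges; a closed walk once around a cycle $O$ traverses every edge of $O$ exactly once. $\pi_1^r(G,x_0)$ is the subgroup of $\pi_1(G,x_0)$ generated by the classes of the closed walks $W_0QW_0^-$, with $W_0$ a walk from $x_0$ to a vertex $y$, $Q$ a closed walk at $y$ once around a cycle of length at most $r$, $W_0^-$ the reverse of $W_0$. The $r$-local covering $p_r:G_r\to G$ is the connected normal covering with characteristic subgroup $\pi_1^r(G,x_0)$. For $\varrho\in\mathbb{N}$ and a vertex $v$ of a graph $X$, the ball $B_X(v,\varrho/2)$ is the subgraph formed by the vertices at distance at most $\varrho/2$ from $v$ and all edges $xy$ with $d_X(v,x)+1+d_X(y,v)\le\varrho$. A covering $p:C\to G$ preserves $(\varrho/2)$-balls if for every vertex $v$ of $G$ and every lift $\hat v$ of $v$, $p$ maps $B_C(\hat v,\varrho/2)$ isomorphically onto $B_G(v,\varrho/2)$. *)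

theory Defs
  imports Main
begin

text \<open>A graph has a vertex set, an edge set, and every edge is given an
(arbitrary, auxiliary) orientation by src/tgt.  Loops (src e = tgt e) and
parallel edges are allowed.\<close>

record ('v, 'e) graph =
  gverts :: "'v set"
  gedges :: "'e set"
  gsrc   :: "'e \<Rightarrow> 'v"
  gtgt   :: "'e \<Rightarrow> 'v"

definition wf_graph :: "('v, 'e, 'x) graph_scheme \<Rightarrow> bool" where
  "wf_graph G \<longleftrightarrow> (\<forall>e \<in> gedges G. gsrc G e \<in> gverts G \<and> gtgt G e \<in> gverts G)"

type_synonym 'e dart = "'e \<times> bool"

definition dstart :: "('v, 'e, 'x) graph_scheme \<Rightarrow> 'e dart \<Rightarrow> 'v" where
  "dstart G d = (if snd d then gsrc G (fst d) else gtgt G (fst d))"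

definition dend :: "('v, 'e, 'x) graph_scheme \<Rightarrow> 'e dart \<Rightarrow> 'v" where
  "dend G d = (if snd d then gtgt G (fst d) else gsrc G (fst d))"

definition flip :: "'e dart \<Rightarrow> 'e dart" where
  "flip d = (fst d, \<not> snd d)"

fun walk :: "('v, 'e, 'x) graph_scheme \<Rightarrow> 'v \<Rightarrow> 'e dart list \<Rightarrow> 'v \<Rightarrow> bool" where
  "walk G x [] y \<longleftrightarrow> x \<in> gverts G \<and> x = y"
| "walk G x (d # W) y \<longleftrightarrow> fst d \<in> gedges G \<and> dstart G d = x \<and> x \<in> gverts G
                           \<and> walk G (dend G d) W y"

definition rev_walk :: "'e dart list \<Rightarrow> 'e dart list" where
  "rev_walk W = rev (map flip W)"

definition connected_graph :: "('v, 'e, 'x) graph_scheme \<Rightarrow> bool" where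
  "connected_graph G \<longleftrightarrow> gverts G \<noteq> {} \<and>
     (\<forall>x \<in> gverts G. \<forall>y \<in> gverts G. \<exists>W. walk G x W y)"

text \<open>Homotopy
classes of walks in a graph (viewed as a 1-complex) correspond bijectively to
reduced walks; the class of W is represented by reduce W, and the product of
classes [a][b] is reduce (a @ b).\<close>

fun reduce :: "'e dart list \<Rightarrow> 'e dart list" where
  "reduce [] = []"
| "reduce (d # W) = (case reduce W of
                        [] \<Rightarrow> [d]
                      | d' # R \<Rightarrow> if d' = flip d then R else d # d' # R)"

definition pi1 :: "('v, 'e, 'x) graph_scheme \<Rightarrow> 'v \<Rightarrow> 'e dart list set" where
  "pi1 G x0 = {reduce W | W. walk G x0 W x0}"

text \<open>Q is a closed walk at y once around a cycle (a loop, a pair of parallel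
edges, or a longer cycle): it is nonempty, closed, uses each of its edges once
and visits each of its vertices once.\<close>
definition once_around_cycle :: "('v, 'e, 'x) graph_scheme \<Rightarrow> 'v \<Rightarrow> 'e dart list \<Rightarrow> bool" where
  "once_around_cycle G y Q \<longleftrightarrow> Q \<noteq> [] \<and> walk G y Q y \<and>
     distinct (map fst Q) \<and> distinct (map (dstart G) Q)"

definition local_gens :: "('v, 'e, 'x) graph_scheme \<Rightarrow> nat \<Rightarrow> 'v \<Rightarrow> 'e dart list set" where
  "local_gens G r x0 = {W0 @ Q @ rev_walk W0 | W0 Q y.
       walk G x0 W0 y \<and> once_around_cycle G y Q \<and> length Q \<le> r}"

inductive_set gen_subgroup :: "'e dart list set \<Rightarrow> 'e dart list set"
  for S :: "'e dart list set" where
  gen: "g \<in> S \<Longrightarrow> reduce g \<in> gen_subgroup S"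
| one: "[] \<in> gen_subgroup S"
| mult: "a \<in> gen_subgroup S \<Longrightarrow> b \<in> gen_subgroup S \<Longrightarrow> reduce (a @ b) \<in> gen_subgroup S"
| inv: "a \<in> gen_subgroup S \<Longrightarrow> rev_walk a \<in> gen_subgroup S"

definition pi1_r :: "('v, 'e, 'x) graph_scheme \<Rightarrow> nat \<Rightarrow> 'v \<Rightarrow> 'e dart list set" where
  "pi1_r G r x0 = gen_subgroup (local_gens G r x0)"

definition map_dart :: "('ce \<Rightarrow> 'e) \<Rightarrow> 'ce dart \<Rightarrow> 'e dart" where
  "map_dart pe d = (pe (fst d), snd d)"

definition darts_at :: "('v, 'e, 'x) graph_scheme \<Rightarrow> 'v \<Rightarrow> 'e dart set" where
  "darts_at G v = {d. fst d \<in> gedges G \<and> dstart G d = v}"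

definition covering ::
  "('cv, 'ce, 'x) graph_scheme \<Rightarrow> ('v, 'e, 'y) graph_scheme \<Rightarrow> ('cv \<Rightarrow> 'v) \<Rightarrow> ('ce \<Rightarrow> 'e) \<Rightarrow> bool" where
  "covering C G pv pe \<longleftrightarrow>
     pv ` gverts C = gverts G \<and> pe ` gedges C \<subseteq> gedges G \<and>
     (\<forall>e \<in> gedges C. pv (gsrc C e) = gsrc G (pe e) \<and> pv (gtgt C e) = gtgt G (pe e)) \<and>
     (\<forall>c \<in> gverts C. bij_betw (map_dart pe) (darts_at C c) (darts_at G (pv c)))"

definition induced_subgroup ::
  "('cv, 'ce, 'x) graph_scheme \<Rightarrow> ('ce \<Rightarrow> 'e) \<Rightarrow> 'cv \<Rightarrow> 'e dart list set" where
  "induced_subgroup C pe c0 = {reduce (map (map_dart pe) W) | W. walk C c0 W c0}"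

definition gdist :: "('v, 'e, 'x) graph_scheme \<Rightarrow> 'v \<Rightarrow> 'v \<Rightarrow> nat" where
  "gdist X u v = (LEAST n. \<exists>W. walk X u W v \<and> length W = n)"

definition ball :: "('v, 'e, 'x) graph_scheme \<Rightarrow> 'v \<Rightarrow> nat \<Rightarrow> ('v, 'e) graph" where
  "ball X v \<rho> = \<lparr> gverts = {x \<in> gverts X. 2 * gdist X v x \<le> \<rho>},
                  gedges = {e \<in> gedges X. gdist X v (gsrc X e) + 1 + gdist X (gtgt X e) v \<le> \<rho>},
                  gsrc = gsrc X, gtgt = gtgt X \<rparr>"

definition graph_iso ::
  "('cv, 'ce, 'x) graph_scheme \<Rightarrow> ('v, 'e, 'y) graph_scheme \<Rightarrow> ('cv \<Rightarrow> 'v) \<Rightarrow> ('ce \<Rightarrow> 'e) \<Rightarrow> bool" where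
  "graph_iso X Y f g \<longleftrightarrow> bij_betw f (gverts X) (gverts Y) \<and> bij_betw g (gedges X) (gedges Y) \<and>
     (\<forall>e \<in> gedges X. f (gsrc X e) = gsrc Y (g e) \<and> f (gtgt X e) = gtgt Y (g e))"

definition preserves_balls ::
  "('cv, 'ce, 'x) graph_scheme \<Rightarrow> ('v, 'e, 'y) graph_scheme \<Rightarrow> ('cv \<Rightarrow> 'v) \<Rightarrow> ('ce \<Rightarrow> 'e) \<Rightarrow> nat \<Rightarrow> bool" where
  "preserves_balls C G pv pe \<rho> \<longleftrightarrow>
     (\<forall>v \<in> gverts G. \<forall>v' \<in> gverts C. pv v' = v \<longrightarrow> graph_iso (ball C v' \<rho>) (ball G v \<rho>) pv pe)"

end

theory Submission
  imports Defs
begin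


definition cr :: "'e dart \<Rightarrow> 'e dart list \<Rightarrow> 'e dart list" where
  "cr d R = (case R of [] \<Rightarrow> [d] | d' # R' \<Rightarrow> if d' = flip d then R' else d # d' # R')"

lemma reduce_Cons: "reduce (d # W) = cr d (reduce W)"
  by (simp add: cr_def)

lemma reduce_append: "reduce (a @ b) = foldr cr a (reduce b)"
  by (induction a) (simp_all add: reduce_Cons del: reduce.simps)

fun red :: "'e dart list \<Rightarrow> bool" where
  "red [] = True"
| "red [d] = True"
| "red (d # d' # R) = (d' \<noteq> flip d \<and> red (d' # R))"

lemma red_tl: "red (d # R) \<Longrightarrow> red R"
  by (cases R) auto

lemma flip_flip[simp]: "flip (flip d) = d"
  by (simp add: flip_def)

lemma red_cr: "red R \<Longrightarrow> red (cr d R)"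
  by (cases R) (auto simp: cr_def dest: red_tl)

lemma red_reduce: "red (reduce W)"
  by (induction W) (simp, simp add: reduce_Cons red_cr del: reduce.simps)

lemma red_reduce_id: "red R \<Longrightarrow> reduce R = R"
proof (induction R)
  case (Cons d R)
  then have "reduce R = R" using red_tl by blast
  then show ?case using Cons.prems by (cases R) (auto simp: reduce_Cons cr_def simp del: reduce.simps)
qed simp

lemma reduce_idem[simp]: "reduce (reduce W) = reduce W"
  using red_reduce red_reduce_id by blast

lemma cr_cancel: "red R \<Longrightarrow> cr (flip x) (cr x R) = R"
proof (cases R)
  case (Cons d' R')
  assume r: "red R"
  show ?thesis
  proof (cases "d' = flip x")
    case True
    then show ?thesis using Cons r by (cases R') (auto simp: cr_def)
  next
    case False
    then show ?thesis using Cons by (auto simp: cr_def)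
  qed
qed (simp add: cr_def)

lemma reduce_cancel: "reduce (a @ x # flip x # b) = reduce (a @ b)"
proof -
  have "reduce (x # flip x # b) = reduce b"
    using cr_cancel[OF red_reduce, of "flip x" b]
    by (simp add: reduce_Cons del: reduce.simps)
  then show ?thesis by (simp add: reduce_append del: reduce.simps)
qed

lemma rev_walk_Cons[simp]: "rev_walk (d # W) = rev_walk W @ [flip d]"
  by (simp add: rev_walk_def)
lemma rev_walk_Nil[simp]: "rev_walk [] = []"
  by (simp add: rev_walk_def)
lemma rev_walk_append[simp]: "rev_walk (A @ B) = rev_walk B @ rev_walk A"
  by (simp add: rev_walk_def)
lemma rev_walk_rev_walk[simp]: "rev_walk (rev_walk W) = W"
  by (simp add: rev_walk_def rev_map comp_def)
lemma length_rev_walk[simp]: "length (rev_walk W) = length W"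
  by (simp add: rev_walk_def)

lemma reduce_cancel_walk: "reduce (a @ W @ rev_walk W @ b) = reduce (a @ b)"
proof (induction W arbitrary: a b)
  case (Cons d W)
  have "reduce (a @ (d # W) @ rev_walk (d # W) @ b) = reduce ((a @ [d]) @ W @ rev_walk W @ (flip d # b))"
    by simp
  also have "\<dots> = reduce ((a @ [d]) @ (flip d # b))" by (rule Cons.IH)
  also have "\<dots> = reduce (a @ b)" using reduce_cancel[of a d b] by simp
  finally show ?case .
qed simp

lemma reduce_inv: "reduce (W @ rev_walk W) = []"
  using reduce_cancel_walk[of "[]" W "[]"] by simp

lemma reduce_cr_append: "reduce (cr d R @ b) = reduce (d # R @ b)"
proof (cases R)
  case (Cons d' R')
  then show ?thesis
  proof (cases "d' = flip d")
    case True
    then show ?thesis using Cons reduce_cancel[of "[]" d "R' @ b"] by (simp add: cr_def del: reduce.simps)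
  qed (simp add: cr_def del: reduce.simps)
qed (simp add: cr_def del: reduce.simps)

lemma reduce_reduce_left: "reduce (reduce a @ b) = reduce (a @ b)"
proof (induction a)
  case (Cons d a)
  have "reduce ((d # a) @ b) = cr d (reduce (a @ b))" by (simp add: reduce_Cons del: reduce.simps)
  also have "\<dots> = cr d (reduce (reduce a @ b))" using Cons by simp
  also have "\<dots> = reduce (d # reduce a @ b)" by (simp add: reduce_Cons del: reduce.simps)
  also have "\<dots> = reduce (cr d (reduce a) @ b)" by (rule reduce_cr_append[symmetric])
  also have "\<dots> = reduce (reduce (d # a) @ b)" by (simp add: reduce_Cons del: reduce.simps)
  finally show ?case ..
qed simp

lemma reduce_mult: "reduce (reduce a @ reduce b) = reduce (a @ b)"
proof -
  have "reduce (reduce a @ reduce b) = reduce (reduce a @ b)"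
    by (simp add: reduce_append del: reduce.simps)
  then show ?thesis using reduce_reduce_left by simp
qed




lemma dstart_flip[simp]: "dstart X (flip d) = dend X d"
  by (simp add: dstart_def dend_def flip_def)
lemma dend_flip[simp]: "dend X (flip d) = dstart X d"
  by (simp add: dstart_def dend_def flip_def)
lemma fst_flip[simp]: "fst (flip d) = fst d"
  by (simp add: flip_def)

lemma walk_verts: "walk X a W b \<Longrightarrow> a \<in> gverts X \<and> b \<in> gverts X"
  by (induction W arbitrary: a) auto

lemma walk_append: "walk X a (A @ B) b \<longleftrightarrow> (\<exists>m. walk X a A m \<and> walk X m B b)"
  by (induction A arbitrary: a) (auto dest: walk_verts)

lemma walk_rev: "walk X a W b \<Longrightarrow> walk X b (rev_walk W) a"
proof (induction W arbitrary: a)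
  case (Cons d W)
  then have "walk X b (rev_walk W) (dend X d)" by simp
  moreover have "walk X (dend X d) [flip d] a" using Cons.prems walk_verts[of X "dend X d" W b] by auto
  ultimately show ?case by (auto simp: walk_append)
qed simp

lemma walk_nth_edge: "walk X a L b \<Longrightarrow> i < length L \<Longrightarrow> fst (L ! i) \<in> gedges X"
  by (induction L arbitrary: a i) (auto simp: nth_Cons split: nat.splits)

lemma walk_nth_next: "walk X a L b \<Longrightarrow> Suc i < length L \<Longrightarrow> dstart X (L ! Suc i) = dend X (L ! i)"
proof (induction L arbitrary: a i)
  case (Cons d L)
  show ?case
  proof (cases i)
    case 0
    then show ?thesis using Cons.prems by (cases L) auto
  next
    case (Suc k)
    then show ?thesis using Cons by auto
  qed
qed simp

lemma not_distinct_map_decomp: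
  assumes "\<not> distinct (map f L)"
  shows "\<exists>L1 d1 L2 d2 L3. L = L1 @ d1 # L2 @ d2 # L3 \<and> f d1 = f d2"
proof -
  obtain xs ys zs y where "map f L = xs @ [y] @ ys @ [y] @ zs"
    using not_distinct_decomp[OF assms] by blast
  then obtain us rest where 1: "L = us @ rest" "map f rest = y # ys @ y # zs"
    by (auto simp: map_eq_append_conv)
  then obtain z zsa where 2: "rest = z # zsa" "f z = y" "map f zsa = ys @ y # zs"
    by (auto simp: map_eq_Cons_conv)
  then obtain a b where 3: "zsa = a @ b" "map f b = y # zs"
    by (auto simp: map_eq_append_conv)
  then obtain w c where 4: "b = w # c" "f w = y"
    by (auto simp: map_eq_Cons_conv)
  have "L = us @ z # a @ w # c" "f z = f w" using 1 2 3 4 by auto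
  then show ?thesis by blast
qed

lemma split_adjacent: "Suc i < length L \<Longrightarrow> L = take i L @ L ! i # L ! Suc i # drop (Suc (Suc i)) L"
  by (metis Cons_nth_drop_Suc Suc_lessD append_take_drop_id)

lemma local_closed:
  assumes "walk G x0 W0 v" "walk G v L v" "length L \<le> r"
  shows "reduce (W0 @ L @ rev_walk W0) \<in> gen_subgroup (local_gens G r x0)"
  using assms
proof (induction "length L" arbitrary: L W0 v rule: less_induct)
  case less
  let ?S = "gen_subgroup (local_gens G r x0)"
  show ?case
  proof (cases "L = []")
    case True
    then show ?thesis using reduce_inv[of W0] gen_subgroup.one by simp
  next
    case Lne: False
    show ?thesis
    proof (cases "\<exists>A d B. L = A @ d # flip d # B")
      case True
      then obtain A d B where L: "L = A @ d # flip d # B" by blast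
      have "walk G v (A @ B) v" using less.prems(2) unfolding L by (auto simp: walk_append)
      then have "reduce (W0 @ (A @ B) @ rev_walk W0) \<in> ?S"
        using less.hyps[of "A @ B"] less.prems L by auto
      moreover have "reduce (W0 @ L @ rev_walk W0) = reduce (W0 @ (A @ B) @ rev_walk W0)"
        using reduce_cancel[of "W0 @ A" d "B @ rev_walk W0"] L by simp
      ultimately show ?thesis by simp
    next
      case nobt: False
      show ?thesis
      proof (cases "distinct (map (dstart G) L)")
        case False
        then obtain L1 d1 L2 d2 L3 where L: "L = L1 @ d1 # L2 @ d2 # L3"
          and eq: "dstart G d1 = dstart G d2"
          using not_distinct_map_decomp by blast
        from less.prems(2) obtain m m' where w1: "walk G v L1 m" and w2: "walk G m (d1 # L2) m'"
          and w3: "walk G m' (d2 # L3) v"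
        proof -
          have "walk G v (L1 @ ((d1 # L2) @ (d2 # L3))) v" using less.prems(2) L by simp
          then obtain m where a1: "walk G v L1 m" and "walk G m ((d1 # L2) @ (d2 # L3)) v"
            using walk_append[of G v L1 "(d1 # L2) @ (d2 # L3)" v] by blast
          then obtain m' where "walk G m (d1 # L2) m'" "walk G m' (d2 # L3) v"
            using walk_append[of G m "d1 # L2" "d2 # L3" v] by blast
          then show thesis using that a1 by blast
        qed
        have "dstart G d1 = m" using w2 by simp
        moreover have "dstart G d2 = m'" using w3 by simp
        ultimately have mm: "m' = m" using eq by simp
        have c1: "walk G x0 (W0 @ L1) m" using less.prems(1) w1 by (auto simp: walk_append)
        have "reduce ((W0 @ L1) @ (d1 # L2) @ rev_walk (W0 @ L1)) \<in> ?S"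
          using less.hyps[of "d1 # L2", OF _ c1] w2 mm less.prems(3) L by auto
        moreover have "reduce (W0 @ (L1 @ d2 # L3) @ rev_walk W0) \<in> ?S"
          using less.hyps[of "L1 @ d2 # L3", OF _ less.prems(1)] w1 w3 mm less.prems(3) L
          by (auto simp: walk_append)
        ultimately have "reduce (reduce ((W0 @ L1) @ (d1 # L2) @ rev_walk (W0 @ L1))
             @ reduce (W0 @ (L1 @ d2 # L3) @ rev_walk W0)) \<in> ?S"
          by (rule gen_subgroup.mult)
        also have "reduce (reduce ((W0 @ L1) @ (d1 # L2) @ rev_walk (W0 @ L1))
             @ reduce (W0 @ (L1 @ d2 # L3) @ rev_walk W0))
           = reduce (((W0 @ L1) @ (d1 # L2)) @ rev_walk (W0 @ L1) @ rev_walk (rev_walk (W0 @ L1)) @ (d2 # L3 @ rev_walk W0))"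
          by (simp add: reduce_mult del: rev_walk_append)
        also have "\<dots> = reduce (((W0 @ L1) @ (d1 # L2)) @ (d2 # L3 @ rev_walk W0))"
          by (rule reduce_cancel_walk)
        also have "\<dots> = reduce (W0 @ L @ rev_walk W0)" using L by simp
        finally show ?thesis .
      next
        case dist: True
        have "distinct (map fst L)"
        proof (rule ccontr)
          assume "\<not> distinct (map fst L)"
          then obtain i j where ij: "i < j" "j < length L" "fst (L ! i) = fst (L ! j)"
            unfolding distinct_conv_nth by (auto, metis linorder_neqE_nat)
          show False
          proof (cases "snd (L ! i) = snd (L ! j)")
            case True
            then have "L ! i = L ! j" using ij by (simp add: prod_eq_iff)
            then have "(map (dstart G) L) ! i = (map (dstart G) L) ! j" using ij by simp
            then show False using dist ij nth_eq_iff_index_eq[of "map (dstart G) L" i j] by simp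
          next
            case False
            then have fl: "L ! j = flip (L ! i)" using ij by (simp add: prod_eq_iff flip_def)
            have si: "Suc i < length L" using ij by simp
            have "dstart G (L ! Suc i) = dend G (L ! i)" by (rule walk_nth_next[OF less.prems(2) si])
            also have "\<dots> = dstart G (L ! j)" using fl by simp
            finally have "(map (dstart G) L) ! Suc i = (map (dstart G) L) ! j" using ij si by simp
            then have "Suc i = j" using dist ij si nth_eq_iff_index_eq[of "map (dstart G) L" "Suc i" j] by simp
            then have "L = take i L @ L ! i # flip (L ! i) # drop (Suc (Suc i)) L"
              using split_adjacent[OF si] fl by simp
            then show False using nobt by blast
          qed
        qed
        then have "once_around_cycle G v L"
          using Lne dist less.prems(2) by (simp add: once_around_cycle_def)
        then have "W0 @ L @ rev_walk W0 \<in> local_gens G r x0"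
          using less.prems unfolding local_gens_def by blast
        then show ?thesis by (rule gen_subgroup.gen)
      qed
    qed
  qed
qed




lemma md_flip: "map_dart pe (flip d) = flip (map_dart pe d)"
  by (simp add: map_dart_def flip_def)

lemma map_md_rev: "map (map_dart pe) (rev_walk W) = rev_walk (map (map_dart pe) W)"
  by (simp add: rev_walk_def rev_map md_flip comp_def)

locale lc =
  fixes G :: "('v, 'e) graph" and C :: "('cv, 'ce) graph"
    and pv :: "'cv \<Rightarrow> 'v" and pe :: "'ce \<Rightarrow> 'e" and r :: nat and x0 :: 'v and c0 :: 'cv
  assumes wfG: "wf_graph G" and connG: "connected_graph G"
    and x0: "x0 \<in> gverts G"
    and wfC: "wf_graph C" and connC: "connected_graph C"
    and cov: "covering C G pv pe"
    and c0: "c0 \<in> gverts C" and pc0: "pv c0 = x0"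
    and sub: "induced_subgroup C pe c0 = pi1_r G r x0"
begin

lemma walk_end_unique: "walk X a W b \<Longrightarrow> walk X a W b' \<Longrightarrow> b = b'"
  by (induction W arbitrary: a) auto

abbreviation md where "md \<equiv> map_dart pe"

lemma pv_verts: "c \<in> gverts C \<Longrightarrow> pv c \<in> gverts G"
  using cov unfolding covering_def by blast

lemma pe_edges: "e \<in> gedges C \<Longrightarrow> pe e \<in> gedges G"
  using cov unfolding covering_def by blast

lemma pv_src: "e \<in> gedges C \<Longrightarrow> pv (gsrc C e) = gsrc G (pe e)"
  using cov unfolding covering_def by blast

lemma pv_tgt: "e \<in> gedges C \<Longrightarrow> pv (gtgt C e) = gtgt G (pe e)"
  using cov unfolding covering_def by blast

lemma dart_bij: "c \<in> gverts C \<Longrightarrow> bij_betw md (darts_at C c) (darts_at G (pv c))"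
  using cov unfolding covering_def by blast

lemma md_dstart: "fst d \<in> gedges C \<Longrightarrow> dstart G (md d) = pv (dstart C d)"
  by (simp add: dstart_def map_dart_def pv_src pv_tgt)

lemma md_dend: "fst d \<in> gedges C \<Longrightarrow> dend G (md d) = pv (dend C d)"
  by (simp add: dend_def map_dart_def pv_src pv_tgt)

lemma project: "walk C c W c' \<Longrightarrow> walk G (pv c) (map md W) (pv c')"
proof (induction W arbitrary: c)
  case (Cons d W)
  have f: "fst (md d) = pe (fst d)" by (simp add: map_dart_def)
  show ?case using Cons by (auto simp: pv_verts md_dstart md_dend pe_edges f)
qed (simp add: pv_verts)

lemma lift_unique:
  "walk C c U1 c1 \<Longrightarrow> walk C c U2 c2 \<Longrightarrow> map md U1 = map md U2 \<Longrightarrow> U1 = U2 \<and> c1 = c2"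
proof (induction U1 arbitrary: c U2)
  case Nil
  then show ?case by auto
next
  case (Cons d1 U1)
  then obtain d2 U2' where U2: "U2 = d2 # U2'" by (cases U2) auto
  have "d1 \<in> darts_at C c" "d2 \<in> darts_at C c" using Cons.prems U2 by (auto simp: darts_at_def)
  moreover have "c \<in> gverts C" using Cons.prems by simp
  moreover have "md d1 = md d2" using Cons.prems U2 by simp
  ultimately have "d1 = d2" using dart_bij unfolding bij_betw_def inj_on_def by blast
  then show ?case using Cons U2 by auto
qed

lemma dend_verts: "fst d \<in> gedges C \<Longrightarrow> dend C d \<in> gverts C"
  using wfC by (auto simp: wf_graph_def dend_def)

lemma lift_exists:
  "c \<in> gverts C \<Longrightarrow> walk G (pv c) U y \<Longrightarrow> \<exists>U' c'. walk C c U' c' \<and> map md U' = U \<and> pv c' = y"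
proof (induction U arbitrary: c)
  case Nil
  then show ?case by auto
next
  case (Cons d U)
  have w: "fst d \<in> gedges G" "dstart G d = pv c" "walk G (dend G d) U y"
    using Cons.prems(2) by simp_all
  have "d \<in> darts_at G (pv c)" using w by (simp add: darts_at_def)
  moreover have "darts_at G (pv c) = md ` darts_at C c"
    using dart_bij[OF Cons.prems(1)] unfolding bij_betw_def by simp
  ultimately obtain d' where d': "d' \<in> darts_at C c" "md d' = d" by (metis imageE)
  have e: "fst d' \<in> gedges C" "dstart C d' = c" using d' by (auto simp: darts_at_def)
  have "pv (dend C d') = dend G d" using md_dend[OF e(1)] d' by simp
  then have "walk G (pv (dend C d')) U y" using w by simp
  then obtain U' c' where U': "walk C (dend C d') U' c'" "map md U' = U" "pv c' = y"
    using Cons.IH[OF dend_verts[OF e(1)]] by blast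
  have "walk C c (d' # U') c'" using e U' Cons.prems(1) by simp
  moreover have "map md (d' # U') = d # U" using d' U' by simp
  ultimately show ?case using U'(3) by (intro exI[of _ "d' # U'"] exI[of _ c']) simp
qed

lemma lift_reduce:
  "walk C c W c' \<Longrightarrow> \<exists>R. walk C c R c' \<and> map md R = reduce (map md W)"
proof (induction W arbitrary: c)
  case Nil
  then show ?case by auto
next
  case (Cons d W)
  have e: "fst d \<in> gedges C" "dstart C d = c" "c \<in> gverts C" and w: "walk C (dend C d) W c'"
    using Cons.prems by auto
  obtain R1 where R1: "walk C (dend C d) R1 c'" "map md R1 = reduce (map md W)"
    using Cons.IH[OF w] by blast
  show ?case
  proof (cases "reduce (map md W)")
    case Nil
    then have "R1 = []" using R1 by simp
    then show ?thesis using R1 e Nil by (intro exI[of _ "[d]"]) auto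
  next
    case (Cons x R)
    then obtain e' R2 where R1e: "R1 = e' # R2" "md e' = x" "map md R2 = R" using R1 by auto
    show ?thesis
    proof (cases "x = flip (md d)")
      case True
      have a: "e' \<in> darts_at C (dend C d)" using R1 R1e by (auto simp: darts_at_def)
      have b: "flip d \<in> darts_at C (dend C d)" using e by (auto simp: darts_at_def)
      have "md e' = md (flip d)" using True R1e by (simp add: md_flip)
      then have "e' = flip d" using a b dart_bij[OF dend_verts[OF e(1)]]
        unfolding bij_betw_def inj_on_def by blast
      then have "walk C c R2 c'" using R1 R1e e by auto
      then show ?thesis using True Cons R1e by (intro exI[of _ R2]) simp
    next
      case False
      then show ?thesis using Cons R1 R1e e by (intro exI[of _ "d # R1"]) simp
    qed
  qed
qed

lemma closed_lift:
  assumes v': "v' \<in> gverts C" and L: "walk G (pv v') L (pv v')" "length L \<le> r"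
    and L': "walk C v' L' z" "map md L' = L"
  shows "z = v'"
proof -
  obtain A where A: "walk C c0 A v'" using connC c0 v' unfolding connected_graph_def by blast
  define W0 where "W0 = map md A"
  have W0: "walk G x0 W0 (pv v')" using project[OF A] pc0 W0_def by simp
  have "reduce (W0 @ L @ rev_walk W0) \<in> pi1_r G r x0"
    unfolding pi1_r_def by (rule local_closed[OF W0 L])
  then obtain W where W: "walk C c0 W c0" "reduce (W0 @ L @ rev_walk W0) = reduce (map md W)"
    using sub unfolding induced_subgroup_def by auto
  have zv: "z \<in> gverts C" using L' walk_verts by metis
  have "walk G (pv v') L (pv z)" using project[OF L'(1)] L'(2) by simp
  then have "pv z = pv v'" using walk_end_unique L(1) by metis
  then have "walk G (pv z) (rev_walk W0) x0" using walk_rev[OF W0] by simp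
  then obtain B w where B: "walk C z B w" "map md B = rev_walk W0" using lift_exists[OF zv] by blast
  have "walk C c0 (A @ L' @ B) w" using A L'(1) B(1) walk_append by metis
  moreover have "map md (A @ L' @ B) = W0 @ L @ rev_walk W0" using B L' W0_def by simp
  ultimately obtain R where R: "walk C c0 R w" "map md R = reduce (W0 @ L @ rev_walk W0)"
    using lift_reduce[of c0 "A @ L' @ B" w] by metis
  obtain R' where R': "walk C c0 R' c0" "map md R' = reduce (map md W)"
    using lift_reduce[OF W(1)] by blast
  have "w = c0" using lift_unique[OF R(1) R'(1)] R R' W by simp
  then have "walk C c0 (rev_walk B) z" using walk_rev[OF B(1)] by simp
  moreover have "map md (rev_walk B) = W0" using B by (simp add: map_md_rev)
  ultimately show "z = v'" using lift_unique[OF _ A] W0_def by blast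
qed

end



lemma gdist_le: "walk X u W v \<Longrightarrow> gdist X u v \<le> length W"
proof -
  assume w: "walk X u W v"
  have "\<exists>W'. walk X u W' v \<and> length W' = length W" using w by blast
  then show ?thesis unfolding gdist_def by (rule Least_le)
qed

lemma gdist_walk: "connected_graph X \<Longrightarrow> u \<in> gverts X \<Longrightarrow> v \<in> gverts X \<Longrightarrow>
   \<exists>W. walk X u W v \<and> length W = gdist X u v"
proof -
  assume a: "connected_graph X" "u \<in> gverts X" "v \<in> gverts X"
  then obtain W where "walk X u W v" unfolding connected_graph_def by blast
  then have "\<exists>n W. walk X u W v \<and> length W = n" by blast
  from LeastI_ex[of "\<lambda>n. \<exists>W. walk X u W v \<and> length W = n", OF this]
  show ?thesis unfolding gdist_def .
qed

lemma gdist_sym: "connected_graph X \<Longrightarrow> u \<in> gverts X \<Longrightarrow> v \<in> gverts X \<Longrightarrow> gdist X u v = gdist X v u"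
proof -
  assume a: "connected_graph X" "u \<in> gverts X" "v \<in> gverts X"
  obtain W where W: "walk X u W v" "length W = gdist X u v" using gdist_walk[OF a(1) a(2) a(3)] by blast
  obtain W' where W': "walk X v W' u" "length W' = gdist X v u" using gdist_walk[OF a(1) a(3) a(2)] by blast
  have "gdist X v u \<le> gdist X u v" using gdist_le[OF walk_rev[OF W(1)]] W by simp
  moreover have "gdist X u v \<le> gdist X v u" using gdist_le[OF walk_rev[OF W'(1)]] W' by simp
  ultimately show ?thesis by simp
qed

lemma gdist_edge:
  assumes "connected_graph X" "wf_graph X" "v \<in> gverts X" "e \<in> gedges X"
  shows "gdist X v (gsrc X e) \<le> gdist X v (gtgt X e) + 1"
    and "gdist X v (gtgt X e) \<le> gdist X v (gsrc X e) + 1"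
proof -
  have s: "gsrc X e \<in> gverts X" and t: "gtgt X e \<in> gverts X" using assms by (auto simp: wf_graph_def)
  obtain W where W: "walk X v W (gtgt X e)" "length W = gdist X v (gtgt X e)" using gdist_walk[OF assms(1,3) t] by blast
  have "walk X (gtgt X e) [(e, False)] (gsrc X e)" using assms s t by (simp add: dstart_def dend_def)
  then have "walk X v (W @ [(e, False)]) (gsrc X e)" using W(1) walk_append by metis
  then show "gdist X v (gsrc X e) \<le> gdist X v (gtgt X e) + 1" using gdist_le[of X v "W @ [(e, False)]" "gsrc X e"] W(2) by simp
  obtain W' where W': "walk X v W' (gsrc X e)" "length W' = gdist X v (gsrc X e)" using gdist_walk[OF assms(1,3) s] by blast
  have "walk X (gsrc X e) [(e, True)] (gtgt X e)" using assms s t by (simp add: dstart_def dend_def)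
  then have "walk X v (W' @ [(e, True)]) (gtgt X e)" using W'(1) walk_append by metis
  then show "gdist X v (gtgt X e) \<le> gdist X v (gsrc X e) + 1" using gdist_le[of X v "W' @ [(e, True)]" "gtgt X e"] W'(2) by simp
qed

context lc begin

lemma K2:
  assumes v': "v' \<in> gverts C" and P: "walk C v' P a" and Q: "walk C v' Q b"
    and ab: "pv a = pv b" and len: "length P + length Q \<le> r"
  shows "a = b"
proof -
  have av: "a \<in> gverts C" using P walk_verts by metis
  have "walk G (pv v') (map md Q) (pv b)" using project[OF Q] .
  then have "walk G (pv a) (rev_walk (map md Q)) (pv v')" using walk_rev ab by metis
  then obtain B z where B: "walk C a B z" "map md B = rev_walk (map md Q)" "pv z = pv v'"
    using lift_exists[OF av] by blast
  have PB: "walk C v' (P @ B) z" using P B by (auto simp: walk_append)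
  have L: "walk G (pv v') (map md (P @ B)) (pv v')" using project[OF PB] B by simp
  have "z = v'" by (rule closed_lift[OF v' L _ PB refl]) (use len B in simp)
  then have "walk C v' (rev_walk B) a" using walk_rev[OF B(1)] by simp
  moreover have "map md (rev_walk B) = map md Q" using B by (simp add: map_md_rev)
  ultimately show ?thesis using lift_unique[OF _ Q] by blast
qed

lemma main: "preserves_balls C G pv pe r"
  unfolding preserves_balls_def
proof (intro ballI impI)
  fix v v' assume v: "v \<in> gverts G" and v': "v' \<in> gverts C" and pvv: "pv v' = v"
  let ?dC = "gdist C v'" and ?dG = "gdist G v"
  have F1: "?dG (pv x') \<le> ?dC x'" if xC: "x' \<in> gverts C" for x'
  proof -
    obtain W where W: "walk C v' W x'" "length W = ?dC x'" using gdist_walk[OF connC v' xC] by blast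
    have "walk G v (map md W) (pv x')" using project[OF W(1)] pvv by simp
    then have "?dG (pv x') \<le> length (map md W)" by (rule gdist_le)
    then show ?thesis using W(2) by simp
  qed
  have F2: "\<exists>x' W'. walk C v' W' x' \<and> pv x' = x \<and> length W' = ?dG x" if xG: "x \<in> gverts G" for x
  proof -
    obtain W where W: "walk G v W x" "length W = ?dG x" using gdist_walk[OF connG v xG] by blast
    have "walk G (pv v') W x" using W(1) pvv by simp
    then obtain U' c' where U': "walk C v' U' c'" "map md U' = W" "pv c' = x"
      using lift_exists[OF v'] by blast
    have "length U' = ?dG x" using U'(2) W(2) by (metis length_map)
    then show ?thesis using U' by blast
  qed
  have symC: "gdist C x v' = ?dC x" if xC: "x \<in> gverts C" for x using gdist_sym[OF connC xC v'] .
  have symG: "gdist G x v = ?dG x" if xG: "x \<in> gverts G" for x using gdist_sym[OF connG xG v] .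
  have Vinj: "x' = y'" if h: "x' \<in> gverts C" "y' \<in> gverts C" "2 * ?dC x' \<le> r" "2 * ?dC y' \<le> r"
    "pv x' = pv y'" for x' y'
  proof -
    obtain P where P: "walk C v' P x'" "length P = ?dC x'" using gdist_walk[OF connC v' h(1)] by blast
    obtain Q where Q: "walk C v' Q y'" "length Q = ?dC y'" using gdist_walk[OF connC v' h(2)] by blast
    have "length P + length Q \<le> r" using P Q h by simp
    then show ?thesis using K2[OF v' P(1) Q(1) h(5)] by simp
  qed
  have srcC: "gsrc C e \<in> gverts C" "gtgt C e \<in> gverts C" if "e \<in> gedges C" for e
    using wfC that by (auto simp: wf_graph_def)
  have srcG: "gsrc G e \<in> gverts G" "gtgt G e \<in> gverts G" if "e \<in> gedges G" for e
    using wfG that by (auto simp: wf_graph_def)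
  let ?BC = "ball C v' r" and ?BG = "ball G v r"
  have BCe: "e \<in> gedges ?BC \<longleftrightarrow> e \<in> gedges C \<and> ?dC (gsrc C e) + 1 + ?dC (gtgt C e) \<le> r" for e
  proof -
    have "e \<in> gedges C \<Longrightarrow> gdist C (gtgt C e) v' = ?dC (gtgt C e)" using symC srcC(2) by blast
    then show ?thesis unfolding ball_def by auto
  qed
  have BGe: "e \<in> gedges ?BG \<longleftrightarrow> e \<in> gedges G \<and> ?dG (gsrc G e) + 1 + ?dG (gtgt G e) \<le> r" for e
  proof -
    have "e \<in> gedges G \<Longrightarrow> gdist G (gtgt G e) v = ?dG (gtgt G e)" using symG srcG(2) by blast
    then show ?thesis unfolding ball_def by auto
  qed
  have BCend: "2 * ?dC (gsrc C e) \<le> r" if eB: "e \<in> gedges ?BC" for e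
  proof -
    have "e \<in> gedges C" "?dC (gsrc C e) + 1 + ?dC (gtgt C e) \<le> r" using eB BCe by auto
    moreover have "?dC (gsrc C e) \<le> ?dC (gtgt C e) + 1" using gdist_edge(1)[OF connC wfC v' calculation(1)] .
    ultimately show ?thesis by linarith
  qed
  have vbij: "bij_betw pv (gverts ?BC) (gverts ?BG)"
    unfolding bij_betw_def
  proof
    show "inj_on pv (gverts ?BC)" unfolding inj_on_def ball_def using Vinj by auto
    show "pv ` gverts ?BC = gverts ?BG"
    proof
      show "pv ` gverts ?BC \<subseteq> gverts ?BG"
        using F1 pv_verts by (force simp: ball_def)
      show "gverts ?BG \<subseteq> pv ` gverts ?BC"
      proof
        fix x assume "x \<in> gverts ?BG"
        then have x: "x \<in> gverts G" "2 * ?dG x \<le> r" by (auto simp: ball_def)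
        then obtain x' W' where "walk C v' W' x'" "pv x' = x" "length W' = ?dG x" using F2 by blast
        moreover have "x' \<in> gverts C" using calculation walk_verts by metis
        ultimately have "2 * ?dC x' \<le> r" using gdist_le x by fastforce
        then show "x \<in> pv ` gverts ?BC" using \<open>x' \<in> gverts C\<close> \<open>pv x' = x\<close> by (auto simp: ball_def)
      qed
    qed
  qed
  have ebij: "bij_betw pe (gedges ?BC) (gedges ?BG)"
    unfolding bij_betw_def
  proof
    show "inj_on pe (gedges ?BC)"
    proof (rule inj_onI)
      fix e1 e2 assume e1: "e1 \<in> gedges ?BC" and e2: "e2 \<in> gedges ?BC" and eq: "pe e1 = pe e2"
      have c1: "e1 \<in> gedges C" and c2: "e2 \<in> gedges C" using e1 e2 BCe by auto
      have "gsrc C e1 = gsrc C e2"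
        using Vinj[OF srcC(1)[OF c1] srcC(1)[OF c2] BCend[OF e1] BCend[OF e2]] pv_src c1 c2 eq by simp
      then have "(e1, True) \<in> darts_at C (gsrc C e1)" "(e2, True) \<in> darts_at C (gsrc C e1)"
        using c1 c2 by (auto simp: darts_at_def dstart_def)
      moreover have "md (e1, True) = md (e2, True)" using eq by (simp add: map_dart_def)
      ultimately show "e1 = e2" using dart_bij[OF srcC(1)[OF c1]] unfolding bij_betw_def inj_on_def by blast
    qed
    show "pe ` gedges ?BC = gedges ?BG"
    proof
      show "pe ` gedges ?BC \<subseteq> gedges ?BG"
      proof
        fix e assume "e \<in> pe ` gedges ?BC"
        then obtain e' where e': "e' \<in> gedges ?BC" "e = pe e'" by blast
        then have c: "e' \<in> gedges C" using BCe by auto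
        have "?dG (gsrc G e) \<le> ?dC (gsrc C e')" using F1[OF srcC(1)[OF c]] pv_src[OF c] e' by simp
        moreover have "?dG (gtgt G e) \<le> ?dC (gtgt C e')" using F1[OF srcC(2)[OF c]] pv_tgt[OF c] e' by simp
        ultimately show "e \<in> gedges ?BG" using BGe BCe e' pe_edges[OF c] by fastforce
      qed
      show "gedges ?BG \<subseteq> pe ` gedges ?BC"
      proof
        fix e assume eB: "e \<in> gedges ?BG"
        then have eG: "e \<in> gedges G" and le: "?dG (gsrc G e) + 1 + ?dG (gtgt G e) \<le> r" using BGe by auto
        obtain P1 s' where P1: "walk C v' P1 s'" "pv s' = gsrc G e" "length P1 = ?dG (gsrc G e)"
          using F2[OF srcG(1)[OF eG]] by blast
        have s'v: "s' \<in> gverts C" using P1 walk_verts by metis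
        have "(e, True) \<in> darts_at G (pv s')" using P1 eG by (simp add: darts_at_def dstart_def)
        then obtain d' where d': "d' \<in> darts_at C s'" "md d' = (e, True)"
          using dart_bij[OF s'v] unfolding bij_betw_def by (metis imageE)
        define e' where "e' = fst d'"
        have d'eq: "d' = (e', True)" using d' e'_def by (cases d') (simp add: map_dart_def)
        have pe': "pe e' = e" using d' d'eq by (simp add: map_dart_def)
        have ce': "e' \<in> gedges C" "gsrc C e' = s'" using d' d'eq by (auto simp: darts_at_def dstart_def)
        have P': "walk C v' (P1 @ [d']) (gtgt C e')" using P1 ce' d'eq srcC[OF ce'(1)]
          by (auto simp: walk_append dstart_def dend_def)
        obtain Q t' where Q: "walk C v' Q t'" "pv t' = gtgt G e" "length Q = ?dG (gtgt G e)"
          using F2[OF srcG(2)[OF eG]] by blast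
        have "gtgt C e' = t'"
          using K2[OF v' P' Q(1)] Q(2) pv_tgt[OF ce'(1)] pe' le P1(3) Q(3) by simp
        then have "?dC (gsrc C e') \<le> ?dG (gsrc G e)" "?dC (gtgt C e') \<le> ?dG (gtgt G e)"
          using gdist_le[OF P1(1)] gdist_le[OF Q(1)] P1(3) Q(3) ce' by auto
        then have "e' \<in> gedges ?BC" using BCe ce' le by fastforce
        then show "e \<in> pe ` gedges ?BC" using pe' by blast
      qed
    qed
  qed
  have hom: "\<forall>e\<in>gedges ?BC. pv (gsrc ?BC e) = gsrc ?BG (pe e) \<and> pv (gtgt ?BC e) = gtgt ?BG (pe e)"
  proof
    fix e assume "e \<in> gedges ?BC"
    then have "e \<in> gedges C" using BCe by blast
    then show "pv (gsrc ?BC e) = gsrc ?BG (pe e) \<and> pv (gtgt ?BC e) = gtgt ?BG (pe e)"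
      using pv_src pv_tgt by (simp add: ball_def)
  qed
  show "graph_iso ?BC ?BG pv pe" unfolding graph_iso_def using vbij ebij hom by (intro conjI)
qed

end



theorem lemma4p3:
  fixes G :: "('v, 'e) graph" and C :: "('cv, 'ce) graph"
    and pv :: "'cv \<Rightarrow> 'v" and pe :: "'ce \<Rightarrow> 'e" and r :: nat
  assumes "wf_graph G" and "connected_graph G"
    and "x0 \<in> gverts G"
    and "wf_graph C" and "connected_graph C"
    and "covering C G pv pe"
    and "c0 \<in> gverts C" and "pv c0 = x0"
    and "induced_subgroup C pe c0 = pi1_r G r x0"
  shows "preserves_balls C G pv pe r"
proof -
  interpret lc G C pv pe r x0 c0 using assms by unfold_locales
  show ?thesis by (rule main)
qed

end
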